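(* Under the standing assumptions, suppose $\varphi$ is lower semicontinuous on $X$, and let $\rho_k\to\infty$, $\sigma_k\to0$ with $\rho_k,\sigma_k>0$. Then for any sequence $\{x_k\}\subset X$ with $x_k\to\bar x$, every accumulation point of $\{y^*_{\rho_k,\sigma_k}(x_k)\}$ belongs to $\arg\max\{f(\bar x,y): y\in Y,\ c(\bar x,y)\le0\}$.
   Context: Standing assumptions: $X\subset\mathbb{R}^n$, $Y\subset\mathbb{R}^m$ nonempty, convex, compact; $f$ continuously differentiable with Lipschitz gradient on $X\times Y$, $f(x,\cdot)$ concave on $Y$; $c=(c_1,\dots,c_p)$ with continuously differentiable components having Lipschitz gradients, each $c_i(x,\cdot)$ convex on $Y$; $\Theta(x):=\{y\in Y:c(x,y)\le0\}\neq\emptyset$ for all $x\in X$. Notation: $[z]_+=\max\{z,0\}$ componentwise; $\varphi(x):=\max_{y\in\Theta(x)}f(x,y)$; $\psi_{\rho,\sigma}(x,y):=f(x,y)-\frac{\rho}{2}\|[c(x,y)]_+\|^2-\frac{\sigma}{2}\|y\|^2$; $y^*_{\rho,\sigma}(x)$ is the unique maximizer of $\psi_{\rho,\sigma}(x,\cdot)$ over $Y$. *)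

theory Defs
  imports "HOL-Analysis.Analysis"
begin

definition C11_on :: "'z::euclidean_space set \<Rightarrow> ('z \<Rightarrow> real) \<Rightarrow> bool" where
  "C11_on S g \<longleftrightarrow> (\<exists>U g'. open U \<and> S \<subseteq> U \<and>
      (\<forall>z\<in>U. (g has_derivative (\<lambda>h. g' z \<bullet> h)) (at z)) \<and>
      continuous_on U g' \<and> (\<exists>L. L-lipschitz_on S g'))"

definition Theta :: "'b set \<Rightarrow> (nat \<Rightarrow> 'a \<Rightarrow> 'b \<Rightarrow> real) \<Rightarrow> nat \<Rightarrow> 'a \<Rightarrow> 'b set" where
  "Theta Y c p x = {y \<in> Y. \<forall>i<p. c i x y \<le> 0}"

definition phi :: "'b set \<Rightarrow> ('a \<Rightarrow> 'b \<Rightarrow> real) \<Rightarrow> (nat \<Rightarrow> 'a \<Rightarrow> 'b \<Rightarrow> real) \<Rightarrow> nat \<Rightarrow> 'a \<Rightarrow> real" where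
  "phi Y f c p x = Sup ((f x) ` Theta Y c p x)"

definition psi :: "('a \<Rightarrow> 'b::real_normed_vector \<Rightarrow> real) \<Rightarrow> (nat \<Rightarrow> 'a \<Rightarrow> 'b \<Rightarrow> real) \<Rightarrow> nat
    \<Rightarrow> real \<Rightarrow> real \<Rightarrow> 'a \<Rightarrow> 'b \<Rightarrow> real" where
  "psi f c p \<rho> \<sigma> x y = f x y - \<rho> / 2 * (\<Sum>i<p. (max (c i x y) 0)^2) - \<sigma> / 2 * (norm y)^2"

definition ystar :: "'b::real_normed_vector set \<Rightarrow> ('a \<Rightarrow> 'b \<Rightarrow> real) \<Rightarrow> (nat \<Rightarrow> 'a \<Rightarrow> 'b \<Rightarrow> real)
    \<Rightarrow> nat \<Rightarrow> real \<Rightarrow> real \<Rightarrow> 'a \<Rightarrow> 'b" where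
  "ystar Y f c p \<rho> \<sigma> x = (THE y. y \<in> Y \<and> (\<forall>y'\<in>Y. psi f c p \<rho> \<sigma> x y' \<le> psi f c p \<rho> \<sigma> x y))"

end

theory Submission
  imports Defs
begin


lemma C11_cont: assumes "C11_on S g" shows "continuous_on S g"
proof -
  from assms obtain U g' where U: "S \<subseteq> U" "\<forall>z\<in>U. (g has_derivative (\<lambda>h. g' z \<bullet> h)) (at z)"
    unfolding C11_on_def by blast
  show ?thesis
    by (rule continuous_at_imp_continuous_on) (use U has_derivative_continuous in blast)
qed

lemma slice_cont:
  assumes "continuous_on (X \<times> Y) (\<lambda>(x, y). g x y)" "x \<in> X"
  shows "continuous_on Y (g x)"
proof -
  have "continuous_on Y ((\<lambda>(x, y). g x y) \<circ> (\<lambda>y. (x, y)))"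
    by (rule continuous_on_compose) (auto intro!: continuous_intros continuous_on_subset[OF assms(1)] simp: assms(2))
  then show ?thesis by (simp add: o_def)
qed

lemma seq_cont:
  assumes "continuous_on (X \<times> Y) (\<lambda>(x, y). g x y)" "\<forall>n. a n \<in> X" "\<forall>n. b n \<in> Y"
    "a \<longlonglongrightarrow> x" "b \<longlonglongrightarrow> y" "x \<in> X" "y \<in> Y"
  shows "(\<lambda>n. g (a n) (b n)) \<longlonglongrightarrow> g x y"
  using continuous_on_tendsto_compose[OF assms(1) tendsto_Pair[OF assms(4) assms(5)]] assms(2,3,6,7)
  by simp

lemma norm_mid:
  fixes a b :: "'b::real_inner"
  shows "(norm ((1/2) *\<^sub>R (a + b)))^2 = ((norm a)^2 + (norm b)^2)/2 - (norm (a - b))^2 / 4"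
  by (simp add: power2_norm_eq_inner inner_add_left inner_add_right inner_diff_left inner_diff_right inner_commute algebra_simps field_simps)

lemma maxsq_mid:
  fixes u v w :: real
  assumes "w \<le> (u + v)/2"
  shows "(max w 0)^2 \<le> ((max u 0)^2 + (max v 0)^2)/2"
proof -
  have "max w 0 \<le> (max u 0 + max v 0)/2" using assms by auto
  then have "(max w 0)^2 \<le> ((max u 0 + max v 0)/2)^2" by (intro power_mono) auto
  also have "\<dots> \<le> ((max u 0)^2 + (max v 0)^2)/2"
  proof -
    have "0 \<le> (max u 0 - max v 0)^2" by simp
    then show ?thesis by (simp add: power2_eq_square algebra_simps)
  qed
  finally show ?thesis .
qed

lemma lin: fixes f0 f1 fm rm r0 r1 s n0 n1 nm d :: real
  assumes "(f1+f0)/2 \<le> fm" "rm \<le> (r1+r0)/2" "nm = (n1+n0)/2 - d/4"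
  shows "((f1 - r1 - s/2*n1) + (f0 - r0 - s/2*n0))/2 + s/8*d \<le> fm - rm - s/2*nm"
  using assms(1,2) unfolding assms(3) by (simp add: field_simps)

lemma ystar_spec:
  fixes Y :: "'b::real_inner set"
  assumes Y: "compact Y" "Y \<noteq> {}" "convex Y" and \<sigma>: "\<sigma> > 0" and \<rho>: "\<rho> \<ge> 0"
    and fc: "continuous_on Y (f x)" and cc: "\<forall>i<p. continuous_on Y (c i x)"
    and fconc: "concave_on Y (f x)" and cconv: "\<forall>i<p. convex_on Y (c i x)"
  shows "ystar Y f c p \<rho> \<sigma> x \<in> Y \<and> (\<forall>y'\<in>Y. psi f c p \<rho> \<sigma> x y' \<le> psi f c p \<rho> \<sigma> x (ystar Y f c p \<rho> \<sigma> x))"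
proof -
  let ?P = "psi f c p \<rho> \<sigma> x"
  have pc: "continuous_on Y ?P"
    unfolding psi_def using fc cc by (auto intro!: continuous_intros)
  obtain y0 where y0: "y0 \<in> Y" "\<forall>y\<in>Y. ?P y \<le> ?P y0"
    using continuous_attains_sup[OF Y(1,2) pc] by blast
  have uniq: "y1 = y0" if y1: "y1 \<in> Y" "\<forall>y\<in>Y. ?P y \<le> ?P y1" for y1
  proof (rule ccontr)
    assume ne: "y1 \<noteq> y0"
    define m where "m = (1/2) *\<^sub>R (y1 + y0)"
    have mY: "m \<in> Y" unfolding m_def
      using convexD[OF Y(3) y1(1) y0(1), of "1/2" "1/2"] by (simp add: scaleR_right_distrib)
    have mid: "m = (1 - 1/2) *\<^sub>R y1 + (1/2) *\<^sub>R y0" unfolding m_def by (simp add: scaleR_right_distrib)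
    have fm: "f x m \<ge> (f x y1 + f x y0)/2"
      using convex_onD[OF fconc[unfolded concave_on_def], of "1/2" y1 y0] y1(1) y0(1) mid by simp
    have cm: "c i x m \<le> (c i x y1 + c i x y0)/2" if "i < p" for i
      using convex_onD[OF cconv[rule_format, OF that], of "1/2" y1 y0] y1(1) y0(1) mid by simp
    have sm: "(\<Sum>i<p. (max (c i x m) 0)^2) \<le> ((\<Sum>i<p. (max (c i x y1) 0)^2) + (\<Sum>i<p. (max (c i x y0) 0)^2))/2"
    proof -
      have "(\<Sum>i<p. (max (c i x m) 0)^2) \<le> (\<Sum>i<p. ((max (c i x y1) 0)^2 + (max (c i x y0) 0)^2)/2)"
        by (rule sum_mono) (use cm maxsq_mid in auto)
      also have "\<dots> = ((\<Sum>i<p. (max (c i x y1) 0)^2) + (\<Sum>i<p. (max (c i x y0) 0)^2))/2"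
        by (simp only: sum_divide_distrib[symmetric] sum.distrib)
      finally show ?thesis .
    qed
    have nm: "(norm m)^2 = ((norm y1)^2 + (norm y0)^2)/2 - (norm (y1 - y0))^2 / 4"
      unfolding m_def by (rule norm_mid)
    have pos: "(norm (y1 - y0))^2 > 0" using ne by simp
    have "?P m \<ge> (?P y1 + ?P y0)/2 + \<sigma>/8 * (norm (y1 - y0))^2"
    proof -
      have a: "\<rho>/2 * (\<Sum>i<p. (max (c i x m) 0)^2) \<le> \<rho>/2 * (((\<Sum>i<p. (max (c i x y1) 0)^2) + (\<Sum>i<p. (max (c i x y0) 0)^2))/2)"
        using sm \<rho> by (intro mult_left_mono) auto
      have a': "\<rho>/2 * (\<Sum>i<p. (max (c i x m) 0)^2) \<le> (\<rho>/2 * (\<Sum>i<p. (max (c i x y1) 0)^2) + \<rho>/2 * (\<Sum>i<p. (max (c i x y0) 0)^2))/2"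
        using a by (simp add: field_simps)
      show ?thesis unfolding psi_def by (rule lin[OF fm a' nm])
    qed
    moreover have "?P m \<le> ?P y0" using y0 mY by blast
    moreover have "?P y0 \<le> ?P y1" using y1 y0 by blast
    moreover have "?P y1 \<le> ?P y0" using y1 y0 by blast
    moreover have "\<sigma>/8 * (norm (y1 - y0))^2 > 0" using pos \<sigma> by simp
    ultimately show False by (simp add: add_divide_distrib)
  qed
  have ex1: "\<exists>!y. y \<in> Y \<and> (\<forall>y'\<in>Y. ?P y' \<le> ?P y)"
    using y0 uniq by blast
  show ?thesis unfolding ystar_def using theI'[OF ex1] by blast
qed



theorem lemmaC4:
  fixes X :: "'a::euclidean_space set" and Y :: "'b::euclidean_space set"
    and f :: "'a \<Rightarrow> 'b \<Rightarrow> real" and c :: "nat \<Rightarrow> 'a \<Rightarrow> 'b \<Rightarrow> real" and p :: nat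
    and \<rho> \<sigma> :: "nat \<Rightarrow> real" and xs :: "nat \<Rightarrow> 'a" and xbar :: 'a and ybar :: 'b
  assumes X: "X \<noteq> {}" "convex X" "compact X"
    and Y: "Y \<noteq> {}" "convex Y" "compact Y"
    and f_smooth: "C11_on (X \<times> Y) (\<lambda>(x, y). f x y)"
    and f_concave: "\<forall>x\<in>X. concave_on Y (f x)"
    and c_smooth: "\<forall>i<p. C11_on (X \<times> Y) (\<lambda>(x, y). c i x y)"
    and c_convex: "\<forall>i<p. \<forall>x\<in>X. convex_on Y (c i x)"
    and Theta_ne: "\<forall>x\<in>X. Theta Y c p x \<noteq> {}"
    and phi_lsc: "\<forall>x\<in>X. \<forall>e>0. \<exists>d>0. \<forall>x'\<in>X. dist x' x < d \<longrightarrow> phi Y f c p x - e < phi Y f c p x'"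
    and rho_pos: "\<forall>k. \<rho> k > 0" and rho_lim: "filterlim \<rho> at_top sequentially"
    and sigma_pos: "\<forall>k. \<sigma> k > 0" and sigma_lim: "\<sigma> \<longlonglongrightarrow> 0"
    and xs_in: "\<forall>k. xs k \<in> X" and xs_lim: "xs \<longlonglongrightarrow> xbar"
    and acc: "\<exists>r. strict_mono r \<and> ((\<lambda>k. ystar Y f c p (\<rho> k) (\<sigma> k) (xs k)) \<circ> r) \<longlonglongrightarrow> ybar"
  shows "ybar \<in> Theta Y c p xbar \<and> (\<forall>y\<in>Theta Y c p xbar. f xbar y \<le> f xbar ybar)"
proof -
  define yk where "yk k = ystar Y f c p (\<rho> k) (\<sigma> k) (xs k)" for k
  define S where "S x y = (\<Sum>i<p. (max (c i x y) 0)^2)" for x y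
  obtain r where r: "strict_mono r" and ylim: "(\<lambda>n. yk (r n)) \<longlonglongrightarrow> ybar"
    using acc unfolding yk_def o_def by blast
  have fc: "continuous_on (X \<times> Y) (\<lambda>(x, y). f x y)" by (rule C11_cont[OF f_smooth])
  have cc: "continuous_on (X \<times> Y) (\<lambda>(x, y). c i x y)" if "i < p" for i
    using C11_cont c_smooth that by blast
  have yk: "yk k \<in> Y \<and> (\<forall>y'\<in>Y. psi f c p (\<rho> k) (\<sigma> k) (xs k) y' \<le> psi f c p (\<rho> k) (\<sigma> k) (xs k) (yk k))" for k
    unfolding yk_def
    by (rule ystar_spec) (use Y sigma_pos rho_pos xs_in f_concave c_convex slice_cont[OF fc] slice_cont[OF cc] in
        \<open>auto simp: less_imp_le\<close>)
  have xbarX: "xbar \<in> X" using closed_sequentially[OF compact_imp_closed[OF X(3)]] xs_in xs_lim by blast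
  have ybarY: "ybar \<in> Y" using closed_sequentially[OF compact_imp_closed[OF Y(3)], of "\<lambda>n. yk (r n)"] yk ylim by blast
  obtain B where B: "\<forall>z\<in>(\<lambda>(x, y). f x y) ` (X \<times> Y). \<bar>z\<bar> \<le> B"
    using compact_imp_bounded[OF compact_continuous_image[OF fc compact_Times[OF X(3) Y(3)]]]
    unfolding bounded_real by blast
  have Bf: "\<bar>f x y\<bar> \<le> B" if "x \<in> X" "y \<in> Y" for x y using B that by force
  obtain R where R: "\<forall>y\<in>Y. norm y \<le> R" using compact_imp_bounded[OF Y(3)] unfolding bounded_iff by blast
  have B0: "0 \<le> B" using Bf X(1) Y(1) by (meson all_not_in_conv abs_ge_zero order_trans)
  have R0: "0 \<le> R" using R Y(1) by (meson all_not_in_conv norm_ge_zero order_trans)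
  have psi_eq: "psi f c p \<rho>' \<sigma>' x y = f x y - \<rho>'/2 * S x y - \<sigma>'/2 * (norm y)^2" for \<rho>' \<sigma>' x y
    unfolding psi_def S_def by simp
  have S0: "S x y \<ge> 0" for x y unfolding S_def by (auto intro: sum_nonneg)
  have Sfeas: "S x z = 0" if "z \<in> Theta Y c p x" for x z
    using that unfolding S_def Theta_def by (auto intro!: sum.neutral)
  have K: "f (xs k) z - \<sigma> k / 2 * R^2 \<le> psi f c p (\<rho> k) (\<sigma> k) (xs k) (yk k)"
    if "z \<in> Theta Y c p (xs k)" for k z
  proof -
    have zY: "z \<in> Y" using that unfolding Theta_def by blast
    have "(norm z)^2 \<le> R^2" using R zY by (intro power_mono) auto
    then have "\<sigma> k / 2 * (norm z)^2 \<le> \<sigma> k / 2 * R^2" using sigma_pos by (intro mult_left_mono) (auto simp: less_imp_le)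
    then have "f (xs k) z - \<sigma> k / 2 * R^2 \<le> psi f c p (\<rho> k) (\<sigma> k) (xs k) z"
      unfolding psi_eq Sfeas[OF that] by simp
    also have "\<dots> \<le> psi f c p (\<rho> k) (\<sigma> k) (xs k) (yk k)" using yk zY by blast
    finally show ?thesis .
  qed
  have psi_le_f: "psi f c p (\<rho> k) (\<sigma> k) (xs k) (yk k) \<le> f (xs k) (yk k)" for k
  proof -
    have "0 \<le> \<rho> k / 2 * S (xs k) (yk k)" using rho_pos S0 by (simp add: less_imp_le)
    moreover have "0 \<le> \<sigma> k / 2 * (norm (yk k))^2" using sigma_pos by (simp add: less_imp_le)
    ultimately show ?thesis unfolding psi_eq by simp
  qed
  have Slim: "(\<lambda>n. S (xs (r n)) (yk (r n))) \<longlonglongrightarrow> S xbar ybar"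
  proof -
    have "(\<lambda>n. c i (xs (r n)) (yk (r n))) \<longlonglongrightarrow> c i xbar ybar" if "i < p" for i
      by (rule seq_cont[OF cc[OF that]]) (use xs_in yk xbarX ybarY ylim LIMSEQ_subseq_LIMSEQ[OF xs_lim r] in \<open>auto simp: o_def\<close>)
    then show ?thesis unfolding S_def by (auto intro!: tendsto_intros)
  qed
  have Sle: "S xbar ybar \<le> e" if e: "e > 0" for e
  proof -
    define C where "C = 2 * B + R^2 / 2"
    have C0: "C \<ge> 0" unfolding C_def using B0 by simp
    have ev: "eventually (\<lambda>k. (2*C+1)/e \<le> \<rho> k \<and> \<sigma> k < 1) sequentially"
      using rho_lim[unfolded filterlim_at_top] order_tendstoD(2)[OF sigma_lim, of 1]
      by (auto intro: eventually_conj)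
    then obtain N where N: "\<forall>k\<ge>N. (2*C+1)/e \<le> \<rho> k \<and> \<sigma> k < 1" unfolding eventually_sequentially by blast
    have bound: "S (xs k) (yk k) \<le> e" if "k \<ge> N" for k
    proof -
      obtain z where z: "z \<in> Theta Y c p (xs k)" using Theta_ne xs_in by blast
      have zY: "z \<in> Y" using z unfolding Theta_def by blast
      have "\<rho> k / 2 * S (xs k) (yk k) \<le> f (xs k) (yk k) - psi f c p (\<rho> k) (\<sigma> k) (xs k) (yk k)"
        unfolding psi_eq using sigma_pos by (simp add: less_imp_le)
      also have "\<dots> \<le> B - (f (xs k) z - \<sigma> k / 2 * R^2)"
        using K[OF z] Bf[OF xs_in[rule_format] conjunct1[OF yk], of k k] by (simp add: abs_le_iff)
      also have "\<dots> \<le> C"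
      proof -
        have "\<sigma> k / 2 * R^2 \<le> 1/2 * R^2" using N that sigma_pos by (intro mult_right_mono) auto
        then show ?thesis unfolding C_def using Bf[OF xs_in[rule_format] zY, of k] by (simp add: abs_le_iff)
      qed
      finally have h: "\<rho> k * S (xs k) (yk k) \<le> 2 * C" by simp
      have "S (xs k) (yk k) * ((2*C+1)/e) \<le> S (xs k) (yk k) * \<rho> k"
        using N that S0 by (intro mult_left_mono) auto
      also have "\<dots> < 2*C+1" using h by (simp add: mult.commute)
      finally have "S (xs k) (yk k) * (2*C+1) < (2*C+1) * e" using e by (simp add: field_simps)
      then show ?thesis using C0 by (simp add: mult.commute)
    qed
    show ?thesis
      by (rule LIMSEQ_le_const2[OF Slim]) (use bound seq_suble[OF r] order_trans in blast)
  qed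
  have Szero: "S xbar ybar = 0"
  proof -
    have "S xbar ybar \<le> 0"
    proof (rule ccontr)
      assume "\<not> S xbar ybar \<le> 0"
      then show False using Sle[of "S xbar ybar / 2"] by simp
    qed
    then show ?thesis using S0 by (meson order_antisym)
  qed
  have feas: "ybar \<in> Theta Y c p xbar"
  proof -
    have "\<forall>i\<in>{..<p}. (max (c i xbar ybar) 0)^2 = 0"
      using Szero unfolding S_def by (subst (asm) sum_nonneg_eq_0_iff) auto
    then show ?thesis unfolding Theta_def using ybarY by (auto simp: max_def split: if_splits)
  qed
  have bdd: "bdd_above (f x ` Theta Y c p x)" if "x \<in> X" for x
    using Bf that unfolding bdd_above_def Theta_def by (auto simp: abs_le_iff)
  have fge: "phi Y f c p xbar \<le> f xbar ybar + 3 * e" if e: "e > 0" for e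
  proof -
    obtain d where d: "d > 0" "\<forall>x'\<in>X. dist x' xbar < d \<longrightarrow> phi Y f c p xbar - e < phi Y f c p x'"
      using phi_lsc xbarX e by blast
    have sl: "(\<lambda>k. \<sigma> k * R^2 / 2) \<longlonglongrightarrow> 0"
      using tendsto_mult[OF sigma_lim tendsto_const[of "R^2/2"]] by simp
    have ev: "eventually (\<lambda>k. dist (xs k) xbar < d \<and> \<sigma> k * R^2 / 2 < e) sequentially"
      using tendstoD[OF xs_lim d(1)] order_tendstoD(2)[OF sl e] by (auto intro: eventually_conj)
    then obtain N where N: "\<forall>k\<ge>N. dist (xs k) xbar < d \<and> \<sigma> k * R^2 / 2 < e" unfolding eventually_sequentially by blast
    have bound: "phi Y f c p xbar - 3 * e \<le> f (xs k) (yk k)" if "k \<ge> N" for k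
    proof -
      have p1: "phi Y f c p xbar - e < phi Y f c p (xs k)" using d N that xs_in by blast
      have "phi Y f c p (xs k) - e < Sup (f (xs k) ` Theta Y c p (xs k))" unfolding phi_def using e by simp
      then obtain z where z: "z \<in> Theta Y c p (xs k)" "phi Y f c p (xs k) - e < f (xs k) z"
        using less_cSup_iff[of "f (xs k) ` Theta Y c p (xs k)"] Theta_ne xs_in bdd by auto
      have "f (xs k) z - \<sigma> k / 2 * R^2 \<le> f (xs k) (yk k)" using K[OF z(1)] psi_le_f[of k] by linarith
      moreover have "\<sigma> k / 2 * R^2 < e" using N that by simp
      ultimately show ?thesis using p1 z(2) by linarith
    qed
    have flim: "(\<lambda>n. f (xs (r n)) (yk (r n))) \<longlonglongrightarrow> f xbar ybar"
      by (rule seq_cont[OF fc]) (use xs_in yk xbarX ybarY ylim LIMSEQ_subseq_LIMSEQ[OF xs_lim r] in \<open>auto simp: o_def\<close>)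
    have "phi Y f c p xbar - 3 * e \<le> f xbar ybar"
      by (rule LIMSEQ_le_const[OF flim]) (use bound seq_suble[OF r] order_trans in blast)
    then show ?thesis by simp
  qed
  have opt: "f xbar y \<le> f xbar ybar" if y: "y \<in> Theta Y c p xbar" for y
  proof -
    have "f xbar y \<le> phi Y f c p xbar" unfolding phi_def
      by (rule cSup_upper) (use y bdd[OF xbarX] in auto)
    also have "\<dots> \<le> f xbar ybar"
      by (rule field_le_epsilon) (use fge[of "_ / 3"] in auto)
    finally show ?thesis .
  qed
  show ?thesis using feas opt by blast
qed

end
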